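(* Let $k$ and $M$ be positive integers, and let $M=p_{1}^{e_{1}}p_{2}^{e_{2}}\cdots p_{l}^{e_{l}}$ be the prime factorization of $M$, where $p_1,\dots,p_l$ are distinct primes. For any integer $n\geq \max\{e_j\mid 1\le j\le l\}$, \[ \sum_{i=0}^{\varphi(M)-1}L(k,n+i)\equiv \sum_{i=0}^{\varphi(M)-1}L(n+i,k)\equiv 0\pmod{M}. \]
   Context: A matrix with entries in $\{0,1\}$ is called lonesum if it is uniquely determined (among $0$-$1$ matrices of the same size) by its row sum vector and column sum vector. For positive integers $a,b$, $L(a,b)$ denotes the number of lonesum matrices of size $a\times b$. $\varphi$ denotes Euler's totient function. *)

theory Defs
  imports "HOL-Number_Theory.Number_Theory"
begin

text \<open>A 0-1 matrix of size a x b is represented as a function nat => nat => bool,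
  with entry (i,j) for i < a, j < b (True = 1), and False outside the index range
  (so that matrices of a given size correspond bijectively to such functions).\<close>

definition zo_matrices :: "nat \<Rightarrow> nat \<Rightarrow> (nat \<Rightarrow> nat \<Rightarrow> bool) set" where
  "zo_matrices a b = {A. \<forall>i j. \<not> (i < a \<and> j < b) \<longrightarrow> \<not> A i j}"

definition row_sum :: "nat \<Rightarrow> (nat \<Rightarrow> nat \<Rightarrow> bool) \<Rightarrow> nat \<Rightarrow> nat" where
  "row_sum b A i = card {j. j < b \<and> A i j}"

definition col_sum :: "nat \<Rightarrow> (nat \<Rightarrow> nat \<Rightarrow> bool) \<Rightarrow> nat \<Rightarrow> nat" where
  "col_sum a A j = card {i. i < a \<and> A i j}"

definition lonesum :: "nat \<Rightarrow> nat \<Rightarrow> (nat \<Rightarrow> nat \<Rightarrow> bool) \<Rightarrow> bool" where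
  "lonesum a b A \<longleftrightarrow> A \<in> zo_matrices a b \<and>
     (\<forall>B \<in> zo_matrices a b.
        (\<forall>i<a. row_sum b B i = row_sum b A i) \<and> (\<forall>j<b. col_sum a B j = col_sum a A j)
        \<longrightarrow> B = A)"

definition L :: "nat \<Rightarrow> nat \<Rightarrow> nat" where
  "L a b = card {A. lonesum a b A}"

end

theory Submission
  imports Defs
begin


lemma nt_dvd:
  fixes M n b :: nat
  assumes "M > 0" and "\<forall>p. prime p \<longrightarrow> multiplicity p M \<le> n"
  shows "M dvd b ^ n * (b ^ totient M - 1)"
proof (cases "b ^ n * (b ^ totient M - 1) = 0")
  case True then show ?thesis by (metis dvd_0_right)
next
  case False
  show ?thesis
  proof (rule multiplicity_le_imp_dvd)
    show "M \<noteq> 0" using assms by simp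
    fix p :: nat assume p: "prime p"
    define e where "e = multiplicity p M"
    have en: "e \<le> n" using assms p e_def by auto
    have "p ^ e dvd b ^ n * (b ^ totient M - 1)"
    proof (cases "p dvd b")
      case True
      have "p ^ e dvd p ^ n" using en by (simp add: le_imp_power_dvd)
      also have "p ^ n dvd b ^ n" using True by (simp add: dvd_power_same)
      finally show ?thesis by simp
    next
      case False
      have cop: "coprime b (p ^ e)" using False p
        by (metis coprime_commute coprime_power_right_iff prime_imp_coprime)
      have "[b ^ totient (p ^ e) = 1] (mod p ^ e)" using euler_theorem[OF cop] .
      moreover have "p ^ e dvd M" unfolding e_def by (simp add: multiplicity_dvd)
      then have "totient (p ^ e) dvd totient M" by (rule totient_dvd)
      then obtain c where c: "totient M = totient (p ^ e) * c" by auto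
      ultimately have "[b ^ totient M = 1] (mod p ^ e)"
        by (metis c cong_pow power_mult power_one)
      then have "p ^ e dvd b ^ totient M - 1" by (rule cong_to_1_nat)
      then show ?thesis by simp
    qed
    then show "multiplicity p M \<le> multiplicity p (b ^ n * (b ^ totient M - 1))"
      unfolding e_def using False p by (intro multiplicity_geI) auto
  qed
qed

lemma nt_int:
  fixes M n b :: nat
  assumes "M > 0" and "\<forall>p. prime p \<longrightarrow> multiplicity p M \<le> n" and "b > 0"
  shows "int M dvd (int b) ^ (n + totient M) - (int b) ^ n"
proof -
  have "int M dvd int (b ^ n * (b ^ totient M - 1))" using nt_dvd[OF assms(1,2), of b] by (simp only: int_dvd_int_iff)
  moreover have "int (b ^ n * (b ^ totient M - 1)) = (int b) ^ (n + totient M) - (int b) ^ n"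
  proof -
    have "b ^ totient M \<ge> 1" using assms(3) by simp
    then show ?thesis by (simp add: of_nat_diff power_add algebra_simps)
  qed
  ultimately show ?thesis by simp
qed



definition ie :: "nat \<Rightarrow> int \<Rightarrow> nat \<Rightarrow> int" where
  "ie s d N = (\<Sum>j\<le>s. (-1)^j * int (s choose j) * (d - int j)^N)"

lemma ie_Suc: "ie (Suc s) d N = ie s d N - ie s (d - 1) N"
proof -
  define g where "g j = (-1::int)^j * (d - int j)^N" for j
  have "ie (Suc s) d N = (\<Sum>j\<le>Suc s. int (Suc s choose j) * g j)"
    unfolding ie_def g_def by (simp add: algebra_simps)
  also have "\<dots> = int (Suc s choose 0) * g 0 + (\<Sum>j\<le>s. int (Suc s choose Suc j) * g (Suc j))"
    by (subst sum.atMost_Suc_shift) simp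
  also have "\<dots> = g 0 + (\<Sum>j\<le>s. int (s choose Suc j) * g (Suc j)) + (\<Sum>j\<le>s. int (s choose j) * g (Suc j))"
    by (simp add: sum.distrib algebra_simps)
  also have "g 0 + (\<Sum>j\<le>s. int (s choose Suc j) * g (Suc j)) = (\<Sum>j\<le>Suc s. int (s choose j) * g j)"
    by (subst sum.atMost_Suc_shift) simp
  also have "\<dots> = (\<Sum>j\<le>s. int (s choose j) * g j)"
    by simp
  also have "\<dots> = ie s d N" unfolding ie_def g_def by (simp add: algebra_simps)
  also have "(\<Sum>j\<le>s. int (s choose j) * g (Suc j)) = - ie s (d - 1) N"
    unfolding ie_def g_def by (simp add: sum_negf[symmetric] algebra_simps)
  finally show ?thesis by simp
qed

lemma ie_card:
  assumes "finite A" "finite S"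
  shows "\<And>D. finite D \<Longrightarrow> S \<subseteq> D \<Longrightarrow>
    int (card {f \<in> A \<rightarrow>\<^sub>E D. S \<subseteq> f ` A}) = ie (card S) (int (card D)) (card A)"
  using assms(2)
proof (induction S rule: finite_induct)
  case empty
  then show ?case using assms(1) by (simp add: ie_def card_funcsetE)
next
  case (insert x S)
  have xD: "x \<in> D" using insert by auto
  have eq: "{f \<in> A \<rightarrow>\<^sub>E D. insert x S \<subseteq> f ` A} =
    {f \<in> A \<rightarrow>\<^sub>E D. S \<subseteq> f ` A} - {f \<in> A \<rightarrow>\<^sub>E (D - {x}). S \<subseteq> f ` A}"
    by (auto simp: PiE_iff)
  have sub: "{f \<in> A \<rightarrow>\<^sub>E (D - {x}). S \<subseteq> f ` A} \<subseteq> {f \<in> A \<rightarrow>\<^sub>E D. S \<subseteq> f ` A}"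
    by (auto simp: PiE_iff)
  have fin: "finite {f \<in> A \<rightarrow>\<^sub>E (D - {x}). S \<subseteq> f ` A}"
    using assms(1) insert by (intro finite_subset[OF _ finite_PiE[of A "\<lambda>_. D - {x}"]]) auto
  have fin2: "finite {f \<in> A \<rightarrow>\<^sub>E D. S \<subseteq> f ` A}"
    using assms(1) insert by (intro finite_subset[OF _ finite_PiE[of A "\<lambda>_. D"]]) auto
  have le: "card {f \<in> A \<rightarrow>\<^sub>E (D - {x}). S \<subseteq> f ` A} \<le> card {f \<in> A \<rightarrow>\<^sub>E D. S \<subseteq> f ` A}"
    using card_mono[OF fin2 sub] .
  have "int (card {f \<in> A \<rightarrow>\<^sub>E D. insert x S \<subseteq> f ` A}) =
     int (card {f \<in> A \<rightarrow>\<^sub>E D. S \<subseteq> f ` A}) - int (card {f \<in> A \<rightarrow>\<^sub>E (D - {x}). S \<subseteq> f ` A})"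
    unfolding eq using card_Diff_subset[OF fin sub] le by (simp add: of_nat_diff)
  also have "\<dots> = ie (card S) (int (card D)) (card A) - ie (card S) (int (card (D - {x}))) (card A)"
    using insert.IH[of D] insert.IH[of "D - {x}"] insert.prems insert.hyps by auto
  also have "int (card (D - {x})) = int (card D) - 1" proof -
    have "card D > 0" using xD insert by (auto simp: card_gt_0_iff)
    then show ?thesis using xD insert by (simp add: of_nat_diff)
  qed
  finally show ?case using insert by (simp add: ie_Suc)
qed



lemma geom_int: "(b - 1) * (\<Sum>i<t. b ^ (n + i)) = b ^ (n + t) - (b::int) ^ n"
  by (induction t) (auto simp: algebra_simps power_add)

lemma m_dvd_ie:
  assumes "k > 0"
  shows "int m dvd ie m (int m) k"
  unfolding ie_def
proof (rule dvd_sum)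
  fix j assume j: "j \<in> {..m}"
  show "int m dvd (-1) ^ j * int (m choose j) * (int m - int j) ^ k"
  proof (cases "j = m")
    case True then show ?thesis using assms by (simp add: power_0_left)
  next
    case False
    then have jm: "j < m" using j by auto
    have "int (m choose j) * (int m - int j) ^ k = int ((m - j) * (m choose j)) * (int m - int j) ^ (k - 1)"
      using jm assms by (simp add: of_nat_diff power_eq_if)
    also have "(m - j) * (m choose j) = m * (m - 1 choose j)" by (rule binomial_absorb_comp)
    finally show ?thesis by (simp add: mult.assoc)
  qed
qed

lemma final_arith:
  fixes k M n :: nat
  assumes "k > 0" and "M > 0"
    and mc: "\<forall>p. prime p \<longrightarrow> multiplicity p M \<le> n"
  shows "int M dvd (\<Sum>i<totient M. \<Sum>m\<in>{1..k}. ie m (int m) k * ie (m - 1) (int m + 1) (n + i))"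
proof -
  have "(\<Sum>i<totient M. \<Sum>m\<in>{1..k}. ie m (int m) k * ie (m - 1) (int m + 1) (n + i))
    = (\<Sum>m\<in>{1..k}. \<Sum>i<totient M. ie m (int m) k * ie (m - 1) (int m + 1) (n + i))"
    by (rule sum.swap)
  also have "\<dots> = (\<Sum>m\<in>{1..k}. \<Sum>j\<le>m - 1. ie m (int m) k * ((-1)^j * int (m - 1 choose j)) *
        (\<Sum>i<totient M. (int m + 1 - int j) ^ (n + i)))"
    unfolding ie_def
    by (simp add: sum_distrib_left sum_distrib_right mult.assoc mult.left_commute sum.swap[of _ "{..<totient M}"])
  finally have eq: "(\<Sum>i<totient M. \<Sum>m\<in>{1..k}. ie m (int m) k * ie (m - 1) (int m + 1) (n + i)) =
     (\<Sum>m\<in>{1..k}. \<Sum>j\<le>m - 1. ie m (int m) k * ((-1)^j * int (m - 1 choose j)) *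
        (\<Sum>i<totient M. (int m + 1 - int j) ^ (n + i)))" .
  show ?thesis unfolding eq
  proof (intro dvd_sum)
    fix m j assume m: "m \<in> {1..k}" and j: "j \<in> {..m - 1}"
    obtain s where s: "ie m (int m) k = int m * s" using m_dvd_ie[OF assms(1), of m] by blast
    have jm: "j < m" using m j by auto
    define b where "b = m + 1 - j"
    have bpos: "b > 0" and bint: "int m + 1 - int j = int b" and b1: "int b - 1 = int (m - j)"
      using jm unfolding b_def by auto
    have key: "int M dvd (int b - 1) * (\<Sum>i<totient M. (int b) ^ (n + i))"
      unfolding geom_int using nt_int[OF assms(2) mc bpos] .
    have "ie m (int m) k * ((-1)^j * int (m - 1 choose j)) * (\<Sum>i<totient M. (int m + 1 - int j) ^ (n + i))
       = s * (-1)^j * int (m * (m - 1 choose j)) * (\<Sum>i<totient M. (int b) ^ (n + i))"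
      unfolding s bint by (simp add: algebra_simps)
    also have "m * (m - 1 choose j) = (m - j) * (m choose j)" by (rule binomial_absorb_comp[symmetric])
    also have "s * (-1)^j * int ((m - j) * (m choose j)) * (\<Sum>i<totient M. (int b) ^ (n + i))
      = (s * (-1)^j * int (m choose j)) * ((int b - 1) * (\<Sum>i<totient M. (int b) ^ (n + i)))"
    proof -
      have e: "int ((m - j) * (m choose j)) = (int b - 1) * int (m choose j)" using b1 by (simp only: of_nat_mult)
      show ?thesis unfolding e by (simp only: mult_ac)
    qed
    finally have eq2: "ie m (int m) k * ((-1)^j * int (m - 1 choose j)) * (\<Sum>i<totient M. (int m + 1 - int j) ^ (n + i))
       = (s * (-1)^j * int (m choose j)) * ((int b - 1) * (\<Sum>i<totient M. (int b) ^ (n + i)))" .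
    show "int M dvd ie m (int m) k * ((-1)^j * int (m - 1 choose j)) * (\<Sum>i<totient M. (int m + 1 - int j) ^ (n + i))"
      unfolding eq2 by (rule dvd_mult[OF key])
  qed
qed



definition rw :: "nat \<Rightarrow> (nat \<Rightarrow> nat \<Rightarrow> bool) \<Rightarrow> nat \<Rightarrow> nat set" where
  "rw b A i = {j. j < b \<and> A i j}"

definition nested :: "nat \<Rightarrow> nat \<Rightarrow> (nat \<Rightarrow> nat \<Rightarrow> bool) \<Rightarrow> bool" where
  "nested a b A \<longleftrightarrow> (\<forall>i<a. \<forall>i'<a. rw b A i \<subseteq> rw b A i' \<or> rw b A i' \<subseteq> rw b A i)"

lemma card_swap_elem:
  assumes "finite X" "j \<in> X" "j' \<notin> X"
  shows "card (insert j' (X - {j})) = card X"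
proof -
  have "card X > 0" using assms by (auto simp: card_gt_0_iff)
  then show ?thesis using assms by (simp add: card_Suc_Diff1)
qed

lemma top_set:
  fixes r :: "nat \<Rightarrow> nat"
  assumes fin: "finite I" and CI: "C \<subseteq> I" and XI: "X \<subseteq> I" and cd: "card X = card C"
    and up: "\<forall>x\<in>C. \<forall>y\<in>I - C. r y < r x"
  shows "sum r X \<le> sum r C \<and> (sum r X = sum r C \<longrightarrow> X = C)"
proof -
  have fX: "finite X" and fC: "finite C" using fin CI XI finite_subset by auto
  have s1: "sum r X = sum r (X \<inter> C) + sum r (X - C)"
    using fX by (rule sum.Int_Diff)
  have s2: "sum r C = sum r (X \<inter> C) + sum r (C - X)"
    using sum.Int_Diff[OF fC, of r X] by (simp add: Int_commute)
  have c1: "card X = card (X \<inter> C) + card (X - C)"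
    using fX by (rule card_Int_Diff)
  have c2: "card C = card (X \<inter> C) + card (C - X)"
    using card_Int_Diff[OF fC, of X] by (simp add: Int_commute)
  have cc: "card (X - C) = card (C - X)" using c1 c2 cd by simp
  show ?thesis
  proof (cases "X - C = {}")
    case True
    then have "card (C - X) = 0" using cc by (metis card.empty)
    then have "C - X = {}" using fC by simp
    then have "X = C" using True by auto
    then show ?thesis by simp
  next
    case False
    have "card (X - C) > 0" using False fX by (auto simp: card_gt_0_iff)
    then have ne: "C - X \<noteq> {}" using cc by (metis card.empty less_irrefl)
    define t where "t = Min (r ` (C - X))"
    have tle: "\<forall>y\<in>C - X. t \<le> r y" unfolding t_def using fC by simp
    have lt: "\<forall>x\<in>X - C. r x < t"
    proof
      fix x assume x: "x \<in> X - C"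
      have "t \<in> r ` (C - X)" unfolding t_def using fC ne by simp
      then obtain y where "y \<in> C - X" "t = r y" by auto
      then show "r x < t" using up x XI by auto
    qed
    have "sum r (X - C) < sum (\<lambda>_. t) (X - C)"
      using False fX lt by (intro sum_strict_mono) auto
    also have "\<dots> = card (C - X) * t" using cc by simp
    also have "\<dots> = sum (\<lambda>_. t) (C - X)" by simp
    also have "\<dots> \<le> sum r (C - X)" using tle by (intro sum_mono) auto
    finally show ?thesis using s1 s2 by simp
  qed
qed

lemma not_nested_not_lonesum:
  assumes "\<not> nested a b A" "A \<in> zo_matrices a b"
  shows "\<not> lonesum a b A"
proof -
  obtain i i' where ii: "i < a" "i' < a" and nc: "\<not> rw b A i \<subseteq> rw b A i'" "\<not> rw b A i' \<subseteq> rw b A i"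
    using assms unfolding nested_def by blast
  obtain j where j: "j < b" "A i j" "\<not> A i' j" using nc(1) unfolding rw_def by auto
  obtain j' where j': "j' < b" "A i' j'" "\<not> A i j'" using nc(2) unfolding rw_def by auto
  have neq: "i \<noteq> i'" "j \<noteq> j'" using j j' by auto
  define B where "B = (\<lambda>x y. if (x = i \<and> y = j) \<or> (x = i' \<and> y = j') then False
      else if (x = i \<and> y = j') \<or> (x = i' \<and> y = j) then True else A x y)"
  have Bz: "B \<in> zo_matrices a b"
    using assms(2) ii j j' unfolding B_def zo_matrices_def by auto
  have rows: "row_sum b B x = row_sum b A x" if "x < a" for x
  proof -
    consider "x = i" | "x = i'" | "x \<noteq> i" "x \<noteq> i'" by blast
    then show ?thesis
    proof cases
      case 1
      have "{y. y < b \<and> B x y} = insert j' ({y. y < b \<and> A x y} - {j})"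
        using 1 neq j j' unfolding B_def by auto
      then show ?thesis unfolding row_sum_def using 1 j j'
        by (simp only:) (rule card_swap_elem, auto)
    next
      case 2
      have "{y. y < b \<and> B x y} = insert j ({y. y < b \<and> A x y} - {j'})"
        using 2 neq j j' unfolding B_def by auto
      then show ?thesis unfolding row_sum_def using 2 j j'
        by (simp only:) (rule card_swap_elem, auto)
    next
      case 3
      then have "{y. y < b \<and> B x y} = {y. y < b \<and> A x y}" unfolding B_def by auto
      then show ?thesis unfolding row_sum_def by simp
    qed
  qed
  have cols: "col_sum a B y = col_sum a A y" if "y < b" for y
  proof -
    consider "y = j" | "y = j'" | "y \<noteq> j" "y \<noteq> j'" by blast
    then show ?thesis
    proof cases
      case 1
      have "{x. x < a \<and> B x y} = insert i' ({x. x < a \<and> A x y} - {i})"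
        using 1 neq j j' ii unfolding B_def by auto
      then show ?thesis unfolding col_sum_def using 1 j j' ii
        by (simp only:) (rule card_swap_elem, auto)
    next
      case 2
      have "{x. x < a \<and> B x y} = insert i ({x. x < a \<and> A x y} - {i'})"
        using 2 neq j j' ii unfolding B_def by auto
      then show ?thesis unfolding col_sum_def using 2 j j' ii
        by (simp only:) (rule card_swap_elem, auto)
    next
      case 3
      then have "{x. x < a \<and> B x y} = {x. x < a \<and> A x y}" unfolding B_def by auto
      then show ?thesis unfolding col_sum_def by simp
    qed
  qed
  have "B \<noteq> A"
  proof
    assume "B = A"
    then have "B i j = A i j" by simp
    then show False using j unfolding B_def by simp
  qed
  then show ?thesis unfolding lonesum_def using Bz rows cols by blast
qed

lemma double_count:
  fixes r :: "nat \<Rightarrow> nat" and a b :: nat and Z :: "nat \<Rightarrow> nat \<Rightarrow> bool"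
  shows "(\<Sum>j<b. sum r {i. i < a \<and> Z i j}) = (\<Sum>i<a. r i * card {j. j < b \<and> Z i j})"
proof -
  have "(\<Sum>j<b. sum r {i. i < a \<and> Z i j}) = (\<Sum>j<b. \<Sum>i<a. if Z i j then r i else 0)"
  proof (rule sum.cong[OF refl])
    fix j
    have e: "{i. i < a \<and> Z i j} = {i \<in> {..<a}. Z i j}" by auto
    show "sum r {i. i < a \<and> Z i j} = (\<Sum>i<a. if Z i j then r i else 0)"
      unfolding e by (rule sum.inter_filter) simp
  qed
  also have "\<dots> = (\<Sum>i<a. \<Sum>j<b. if Z i j then r i else 0)" by (rule sum.swap)
  also have "\<dots> = (\<Sum>i<a. r i * card {j. j < b \<and> Z i j})"
  proof (rule sum.cong[OF refl])
    fix i
    have e: "{j. j < b \<and> Z i j} = {j \<in> {..<b}. Z i j}" by auto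
    have "(\<Sum>j<b. if Z i j then r i else 0) = sum (\<lambda>_. r i) {j. j < b \<and> Z i j}"
      unfolding e by (rule sum.inter_filter[symmetric]) simp
    then show "(\<Sum>j<b. if Z i j then r i else 0) = r i * card {j. j < b \<and> Z i j}"
      by simp
  qed
  finally show ?thesis .
qed

lemma nested_lonesum:
  assumes Az: "A \<in> zo_matrices a b" and nest: "nested a b A"
  shows "lonesum a b A"
  unfolding lonesum_def
proof (intro conjI ballI impI)
  show "A \<in> zo_matrices a b" by (rule Az)
  fix B assume Bz: "B \<in> zo_matrices a b"
    and sums: "(\<forall>i<a. row_sum b B i = row_sum b A i) \<and> (\<forall>j<b. col_sum a B j = col_sum a A j)"
  define r where "r i = card (rw b A i)" for i
  define C where "C j = {i. i < a \<and> A i j}" for j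
  define X where "X j = {i. i < a \<and> B i j}" for j
  have ts: "sum r (X j) \<le> sum r (C j) \<and> (sum r (X j) = sum r (C j) \<longrightarrow> X j = C j)" if j: "j < b" for j
  proof (rule top_set[of "{..<a}"])
    show "finite {..<a}" by simp
    show "C j \<subseteq> {..<a}" "X j \<subseteq> {..<a}" unfolding C_def X_def by auto
    show "card (X j) = card (C j)" using sums j unfolding X_def C_def col_sum_def by auto
    show "\<forall>x\<in>C j. \<forall>y\<in>{..<a} - C j. r y < r x"
    proof (intro ballI)
      fix x y assume x: "x \<in> C j" and y: "y \<in> {..<a} - C j"
      have jx: "j \<in> rw b A x" and jy: "j \<notin> rw b A y" using x y j unfolding C_def rw_def by auto
      have "rw b A x \<subseteq> rw b A y \<or> rw b A y \<subseteq> rw b A x" using nest x y unfolding nested_def C_def by auto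
      then have "rw b A y \<subset> rw b A x" using jx jy by auto
      moreover have "finite (rw b A x)" unfolding rw_def by auto
      ultimately show "r y < r x" unfolding r_def by (rule psubset_card_mono[rotated])
    qed
  qed
  have rr: "card {j. j < b \<and> B i j} = r i" if "i < a" for i
    using sums that unfolding row_sum_def r_def rw_def by auto
  have "(\<Sum>j<b. sum r (X j)) = (\<Sum>i<a. r i * card {j. j < b \<and> B i j})"
    unfolding X_def by (rule double_count)
  also have "\<dots> = (\<Sum>i<a. r i * card {j. j < b \<and> A i j})"
    using rr by (intro sum.cong) (auto simp: r_def rw_def)
  also have "\<dots> = (\<Sum>j<b. sum r (C j))"
    unfolding C_def by (rule double_count[symmetric])
  finally have eqs: "(\<Sum>j<b. sum r (X j)) = (\<Sum>j<b. sum r (C j))" .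
  have XC: "X j = C j" if "j < b" for j
  proof -
    have "sum r (X j) = sum r (C j)"
      using sum_mono_inv[OF eqs, of j] ts that by auto
    then show ?thesis using ts that by auto
  qed
  show "B = A"
  proof (intro ext)
    fix x y
    show "B x y = A x y"
    proof (cases "x < a \<and> y < b")
      case True
      then have "x \<in> X y \<longleftrightarrow> x \<in> C y" using XC by auto
      then show ?thesis using True unfolding X_def C_def by auto
    next
      case False
      then show ?thesis using Az Bz unfolding zo_matrices_def by auto
    qed
  qed
qed

lemma lonesum_iff: "lonesum a b A \<longleftrightarrow> A \<in> zo_matrices a b \<and> nested a b A"
  using nested_lonesum not_nested_not_lonesum lonesum_def by blast



lemma lonesum_transpose:
  assumes "lonesum a b A"
  shows "lonesum b a (\<lambda>i j. A j i)"
  unfolding lonesum_def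
proof (intro conjI ballI impI)
  show "(\<lambda>i j. A j i) \<in> zo_matrices b a"
    using assms unfolding lonesum_def zo_matrices_def by auto
  fix B assume Bz: "B \<in> zo_matrices b a"
    and s: "(\<forall>i<b. row_sum a B i = row_sum a (\<lambda>i j. A j i) i) \<and>
            (\<forall>j<a. col_sum b B j = col_sum b (\<lambda>i j. A j i) j)"
  define C where "C = (\<lambda>i j. B j i)"
  have Cz: "C \<in> zo_matrices a b" using Bz unfolding C_def zo_matrices_def by auto
  have "(\<forall>i<a. row_sum b C i = row_sum b A i) \<and> (\<forall>j<b. col_sum a C j = col_sum a A j)"
    using s unfolding C_def row_sum_def col_sum_def by auto
  moreover have "\<forall>B\<in>zo_matrices a b. (\<forall>i<a. row_sum b B i = row_sum b A i) \<and> (\<forall>j<b. col_sum a B j = col_sum a A j) \<longrightarrow> B = A"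
    using assms unfolding lonesum_def by (elim conjE)
  ultimately have "C = A" using Cz by blast
  then show "B = (\<lambda>i j. A j i)" unfolding C_def by (metis)
qed

lemma L_sym: "L a b = L b a"
proof -
  define T where "T = (\<lambda>(A::nat \<Rightarrow> nat \<Rightarrow> bool) i j. A j i)"
  have TT: "T (T A) = A" for A unfolding T_def by simp
  have "{A. lonesum a b A} = T ` {A. lonesum b a A}"
  proof
    show "{A. lonesum a b A} \<subseteq> T ` {A. lonesum b a A}"
    proof
      fix A assume "A \<in> {A. lonesum a b A}"
      then have "lonesum b a (T A)" unfolding T_def by (simp add: lonesum_transpose)
      moreover have "A = T (T A)" by (simp add: TT)
      ultimately show "A \<in> T ` {A. lonesum b a A}" by blast
    qed
    show "T ` {A. lonesum b a A} \<subseteq> {A. lonesum a b A}"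
    proof
      fix A assume "A \<in> T ` {A. lonesum b a A}"
      then obtain B where "lonesum b a B" "A = T B" by blast
      then show "A \<in> {A. lonesum a b A}" unfolding T_def by (simp add: lonesum_transpose)
    qed
  qed
  moreover have "inj T"
    by (metis TT injI)
  ultimately have "card {A. lonesum a b A} = card {A. lonesum b a A}"
    by (simp add: card_image inj_on_subset)
  then show ?thesis unfolding L_def .
qed



definition Phi :: "nat \<Rightarrow> nat \<Rightarrow> (nat \<Rightarrow> nat) \<Rightarrow> (nat \<Rightarrow> nat) \<Rightarrow> nat \<Rightarrow> nat \<Rightarrow> bool" where
  "Phi k N \<sigma> f = (\<lambda>i j. i < k \<and> j < N \<and> \<sigma> i \<le> f j)"

definition SIG :: "nat \<Rightarrow> nat \<Rightarrow> (nat \<Rightarrow> nat) set" where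
  "SIG k m = {\<sigma> \<in> {..<k} \<rightarrow>\<^sub>E {1..m}. {1..m} \<subseteq> \<sigma> ` {..<k}}"

definition FF :: "nat \<Rightarrow> nat \<Rightarrow> (nat \<Rightarrow> nat) set" where
  "FF N m = {f \<in> {..<N} \<rightarrow>\<^sub>E {0..m}. {1..m-1} \<subseteq> f ` {..<N}}"

definition Dom :: "nat \<Rightarrow> nat \<Rightarrow> ((nat \<Rightarrow> nat) \<times> (nat \<Rightarrow> nat)) set" where
  "Dom k N = (\<Union>m\<in>{1..k}. SIG k m \<times> FF N m)"

lemma phi_lonesum:
  "lonesum k N (Phi k N \<sigma> f)"
  unfolding lonesum_iff
proof
  show "Phi k N \<sigma> f \<in> zo_matrices k N" unfolding Phi_def zo_matrices_def by auto
  show "nested k N (Phi k N \<sigma> f)"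
    unfolding nested_def
  proof (intro allI impI)
    fix i i' assume "i < k" "i' < k"
    show "rw N (Phi k N \<sigma> f) i \<subseteq> rw N (Phi k N \<sigma> f) i' \<or> rw N (Phi k N \<sigma> f) i' \<subseteq> rw N (Phi k N \<sigma> f) i"
    proof (cases "\<sigma> i \<le> \<sigma> i'")
      case True
      then have "rw N (Phi k N \<sigma> f) i' \<subseteq> rw N (Phi k N \<sigma> f) i"
        using \<open>i < k\<close> unfolding rw_def Phi_def by auto
      then show ?thesis by blast
    next
      case False
      then have "rw N (Phi k N \<sigma> f) i \<subseteq> rw N (Phi k N \<sigma> f) i'"
        using \<open>i' < k\<close> unfolding rw_def Phi_def by auto
      then show ?thesis by blast
    qed
  qed
qed

lemma recover_sigma:
  assumes s: "\<sigma> \<in> SIG k m" and f: "f \<in> FF N m" and i: "i < k"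
  shows "\<sigma> i = card {rw N (Phi k N \<sigma> f) i' | i'. i' < k \<and> rw N (Phi k N \<sigma> f) i \<subseteq> rw N (Phi k N \<sigma> f) i'}"
proof -
  define lev where "lev l = {j. j < N \<and> l \<le> f j}" for l
  have rwl: "rw N (Phi k N \<sigma> f) i' = lev (\<sigma> i')" if "i' < k" for i'
    using that unfolding rw_def Phi_def lev_def by auto
  have srange: "\<sigma> i' \<in> {1..m}" if "i' < k" for i'
    using s that unfolding SIG_def by auto
  have ssurj: "{1..m} \<subseteq> \<sigma> ` {..<k}" using s unfolding SIG_def by auto
  have levinj: "\<not> lev l \<subseteq> lev l'" if "l \<in> {1..m}" "l' \<in> {1..m}" "l < l'" for l l'
  proof -
    have "l \<in> {1..m-1}" using that by auto
    then obtain j where j: "j < N" "f j = l" using f unfolding FF_def by auto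
    then have "j \<in> lev l" "j \<notin> lev l'" unfolding lev_def using that by auto
    then show ?thesis by auto
  qed
  have seteq: "{rw N (Phi k N \<sigma> f) i' | i'. i' < k \<and> rw N (Phi k N \<sigma> f) i \<subseteq> rw N (Phi k N \<sigma> f) i'}
     = lev ` {1..\<sigma> i}"
  proof
    show "{rw N (Phi k N \<sigma> f) i' | i'. i' < k \<and> rw N (Phi k N \<sigma> f) i \<subseteq> rw N (Phi k N \<sigma> f) i'} \<subseteq> lev ` {1..\<sigma> i}"
    proof
      fix R assume "R \<in> {rw N (Phi k N \<sigma> f) i' | i'. i' < k \<and> rw N (Phi k N \<sigma> f) i \<subseteq> rw N (Phi k N \<sigma> f) i'}"
      then obtain i' where i': "i' < k" "lev (\<sigma> i) \<subseteq> lev (\<sigma> i')" "R = lev (\<sigma> i')"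
        using rwl i by auto
      have "\<sigma> i' \<le> \<sigma> i"
      proof (rule ccontr)
        assume "\<not> \<sigma> i' \<le> \<sigma> i"
        then show False using levinj[of "\<sigma> i" "\<sigma> i'"] srange i i' by auto
      qed
      then show "R \<in> lev ` {1..\<sigma> i}" using i' srange[OF i'(1)] by auto
    qed
    show "lev ` {1..\<sigma> i} \<subseteq> {rw N (Phi k N \<sigma> f) i' | i'. i' < k \<and> rw N (Phi k N \<sigma> f) i \<subseteq> rw N (Phi k N \<sigma> f) i'}"
    proof
      fix R assume "R \<in> lev ` {1..\<sigma> i}"
      then obtain l where l: "l \<in> {1..\<sigma> i}" "R = lev l" by auto
      have "l \<in> {1..m}" using l srange[OF i] by auto
      then obtain i' where i': "i' < k" "\<sigma> i' = l" using ssurj by auto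
      have "lev (\<sigma> i) \<subseteq> lev l" using l unfolding lev_def by auto
      then show "R \<in> {rw N (Phi k N \<sigma> f) i' | i'. i' < k \<and> rw N (Phi k N \<sigma> f) i \<subseteq> rw N (Phi k N \<sigma> f) i'}"
        using i' l rwl[OF i] rwl[OF i'(1)] by auto
    qed
  qed
  have "inj_on lev {1..\<sigma> i}"
  proof (rule inj_onI)
    fix l l' assume "l \<in> {1..\<sigma> i}" "l' \<in> {1..\<sigma> i}" "lev l = lev l'"
    moreover have "l \<in> {1..m}" "l' \<in> {1..m}" using calculation srange[OF i] by auto
    ultimately show "l = l'" using levinj[of l l'] levinj[of l' l]
      by (metis linorder_neqE_nat order_refl)
  qed
  then have "card (lev ` {1..\<sigma> i}) = \<sigma> i" by (simp add: card_image)
  then show ?thesis using seteq by simp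
qed

lemma recover_f:
  assumes s: "\<sigma> \<in> SIG k m" and f: "f \<in> FF N m" and j: "j < N"
  shows "f j = card {\<sigma> i | i. i < k \<and> Phi k N \<sigma> f i j}"
proof -
  have srange: "\<sigma> i' \<in> {1..m}" if "i' < k" for i'
    using s that unfolding SIG_def by auto
  have ssurj: "{1..m} \<subseteq> \<sigma> ` {..<k}" using s unfolding SIG_def by auto
  have fm: "f j \<le> m" using f j unfolding FF_def by auto
  have "{\<sigma> i | i. i < k \<and> Phi k N \<sigma> f i j} = {1..f j}"
  proof
    show "{\<sigma> i | i. i < k \<and> Phi k N \<sigma> f i j} \<subseteq> {1..f j}"
      using srange unfolding Phi_def by fastforce
    show "{1..f j} \<subseteq> {\<sigma> i | i. i < k \<and> Phi k N \<sigma> f i j}"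
    proof
      fix l assume l: "l \<in> {1..f j}"
      then have "l \<in> {1..m}" using fm by auto
      then obtain i where "i < k" "\<sigma> i = l" using ssurj by auto
      then show "l \<in> {\<sigma> i | i. i < k \<and> Phi k N \<sigma> f i j}" using l j unfolding Phi_def by auto
    qed
  qed
  then show ?thesis by simp
qed

lemma phi_inj: "inj_on (\<lambda>(\<sigma>, f). Phi k N \<sigma> f) (Dom k N)"
proof (rule inj_onI)
  fix p q assume p: "p \<in> Dom k N" and q: "q \<in> Dom k N"
    and e: "(\<lambda>(\<sigma>, f). Phi k N \<sigma> f) p = (\<lambda>(\<sigma>, f). Phi k N \<sigma> f) q"
  from p obtain m where "p \<in> SIG k m \<times> FF N m" unfolding Dom_def by blast
  then obtain \<sigma> f where pp: "p = (\<sigma>, f)" "\<sigma> \<in> SIG k m" "f \<in> FF N m" by blast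
  from q obtain m' where "q \<in> SIG k m' \<times> FF N m'" unfolding Dom_def by blast
  then obtain \<sigma>' f' where qq: "q = (\<sigma>', f')" "\<sigma>' \<in> SIG k m'" "f' \<in> FF N m'" by blast
  have e': "Phi k N \<sigma> f = Phi k N \<sigma>' f'" using e pp qq by simp
  have ss: "\<sigma> = \<sigma>'"
  proof
    fix i show "\<sigma> i = \<sigma>' i"
    proof (cases "i < k")
      case True
      let ?A = "Phi k N \<sigma> f" and ?B = "Phi k N \<sigma>' f'"
      have "\<sigma> i = card {rw N ?A i' | i'. i' < k \<and> rw N ?A i \<subseteq> rw N ?A i'}"
        by (rule recover_sigma[OF pp(2,3) True])
      also have "\<dots> = card {rw N ?B i' | i'. i' < k \<and> rw N ?B i \<subseteq> rw N ?B i'}"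
        unfolding e' ..
      also have "\<dots> = \<sigma>' i"
        by (rule recover_sigma[OF qq(2,3) True, symmetric])
      finally show ?thesis .
    next
      case False
      have h: "\<sigma> \<in> {..<k} \<rightarrow>\<^sub>E {1..m}" "\<sigma>' \<in> {..<k} \<rightarrow>\<^sub>E {1..m'}" using pp(2) qq(2) unfolding SIG_def by auto
      have "i \<notin> {..<k}" using False by simp
      then show ?thesis using PiE_arb[OF h(1)] PiE_arb[OF h(2)] by metis
    qed
  qed
  have ff: "f = f'"
  proof
    fix j show "f j = f' j"
    proof (cases "j < N")
      case True
      let ?A = "Phi k N \<sigma> f" and ?B = "Phi k N \<sigma>' f'"
      have "f j = card {\<sigma> i | i. i < k \<and> ?A i j}"
        by (rule recover_f[OF pp(2,3) True])
      also have "\<dots> = card {\<sigma>' i | i. i < k \<and> ?B i j}"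
      proof -
        have e2: "Phi k N \<sigma>' f = Phi k N \<sigma>' f'" using e' ss by (simp only:)
        show ?thesis unfolding ss e2 ..
      qed
      also have "\<dots> = f' j"
        by (rule recover_f[OF qq(2,3) True, symmetric])
      finally show ?thesis .
    next
      case False
      have h: "f \<in> {..<N} \<rightarrow>\<^sub>E {0..m}" "f' \<in> {..<N} \<rightarrow>\<^sub>E {0..m'}" using pp(3) qq(3) unfolding FF_def by auto
      have "j \<notin> {..<N}" using False by simp
      then show ?thesis using PiE_arb[OF h(1)] PiE_arb[OF h(2)] by metis
    qed
  qed
  show "p = q" using pp qq ss ff by simp
qed



lemma phi_surj:
  assumes k: "k > 0" and ls: "lonesum k N A"
  shows "A \<in> (\<lambda>(\<sigma>, f). Phi k N \<sigma> f) ` Dom k N"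
proof -
  have Az: "A \<in> zo_matrices k N" and nest: "nested k N A" using ls lonesum_iff by auto
  define RS where "RS = rw N A ` {..<k}"
  define m where "m = card RS"
  have finRS: "finite RS" unfolding RS_def by simp
  have chain: "R1 \<subseteq> R2 \<or> R2 \<subseteq> R1" if "R1 \<in> RS" "R2 \<in> RS" for R1 R2
    using that nest unfolding RS_def nested_def by auto
  have RSsub: "R \<subseteq> {..<N}" if "R \<in> RS" for R using that unfolding RS_def rw_def by auto
  define \<rho> where "\<rho> R = card {R' \<in> RS. R \<subseteq> R'}" for R
  have r1: "\<rho> R \<in> {1..m}" if "R \<in> RS" for R
  proof -
    have "{R' \<in> RS. R \<subseteq> R'} \<subseteq> RS" by auto
    then have "\<rho> R \<le> m" unfolding \<rho>_def m_def using finRS by (rule card_mono[rotated])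
    moreover have "R \<in> {R' \<in> RS. R \<subseteq> R'}" using that by auto
    then have "\<rho> R \<ge> 1" unfolding \<rho>_def using finRS
      by (metis (no_types, lifting) One_nat_def Suc_leI card_gt_0_iff empty_iff finite_subset mem_Collect_eq subsetI)
    ultimately show ?thesis by simp
  qed
  have r2: "R1 \<subseteq> R2 \<longleftrightarrow> \<rho> R2 \<le> \<rho> R1" if R: "R1 \<in> RS" "R2 \<in> RS" for R1 R2
  proof
    assume "R1 \<subseteq> R2"
    then have "{R' \<in> RS. R2 \<subseteq> R'} \<subseteq> {R' \<in> RS. R1 \<subseteq> R'}" by auto
    then show "\<rho> R2 \<le> \<rho> R1" unfolding \<rho>_def using finRS by (intro card_mono) auto
  next
    assume le: "\<rho> R2 \<le> \<rho> R1"
    show "R1 \<subseteq> R2"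
    proof (rule ccontr)
      assume n: "\<not> R1 \<subseteq> R2"
      then have "R2 \<subseteq> R1" using chain R by blast
      then have "{R' \<in> RS. R1 \<subseteq> R'} \<subset> {R' \<in> RS. R2 \<subseteq> R'}" using n R by auto
      then have "\<rho> R1 < \<rho> R2" unfolding \<rho>_def using finRS by (intro psubset_card_mono) auto
      then show False using le by simp
    qed
  qed
  have r3: "\<rho> ` RS = {1..m}"
  proof (rule card_subset_eq)
    show "finite {1..m}" by simp
    show "\<rho> ` RS \<subseteq> {1..m}" using r1 by auto
    have "inj_on \<rho> RS"
    proof (rule inj_onI)
      fix R1 R2 assume "R1 \<in> RS" "R2 \<in> RS" "\<rho> R1 = \<rho> R2"
      then show "R1 = R2" using r2 by (metis order_refl subset_antisym)
    qed
    then show "card (\<rho> ` RS) = card {1..m}" unfolding m_def by (simp add: card_image)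
  qed
  define \<sigma> where "\<sigma> = restrict (\<lambda>i. \<rho> (rw N A i)) {..<k}"
  define f where "f = restrict (\<lambda>j. card {R \<in> RS. j \<in> R}) {..<N}"
  have rwRS: "rw N A i \<in> RS" if "i < k" for i using that unfolding RS_def by auto
  have mk: "m \<in> {1..k}"
  proof -
    have "RS \<noteq> {}" using k unfolding RS_def by auto
    then have "m \<ge> 1" unfolding m_def using finRS by (simp add: Suc_leI card_gt_0_iff)
    moreover have "m \<le> k" unfolding m_def RS_def by (metis card_image_le card_lessThan finite_lessThan)
    ultimately show ?thesis by simp
  qed
  have sig: "\<sigma> \<in> SIG k m"
    unfolding SIG_def
  proof (intro CollectI conjI)
    show "\<sigma> \<in> {..<k} \<rightarrow>\<^sub>E {1..m}" unfolding \<sigma>_def using r1 rwRS unfolding restrict_PiE_iff by auto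
    have "\<sigma> ` {..<k} = \<rho> ` RS" unfolding \<sigma>_def RS_def by (auto simp: image_image)
    then show "{1..m} \<subseteq> \<sigma> ` {..<k}" using r3 by simp
  qed
  have fF: "f \<in> FF N m"
    unfolding FF_def
  proof (intro CollectI conjI)
    have "card {R \<in> RS. j \<in> R} \<le> m" for j unfolding m_def using finRS by (intro card_mono) auto
    then show "f \<in> {..<N} \<rightarrow>\<^sub>E {0..m}" unfolding f_def unfolding restrict_PiE_iff by auto
    show "{1..m - 1} \<subseteq> f ` {..<N}"
    proof
      fix l assume l: "l \<in> {1..m - 1}"
      have "l \<in> {1..m}" "l + 1 \<in> {1..m}" using l by auto
      then obtain R R' where R: "R \<in> RS" "\<rho> R = l" and R': "R' \<in> RS" "\<rho> R' = l + 1"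
        using r3 by (metis imageE)
      have "\<not> R \<subseteq> R'" using r2[OF R(1) R'(1)] R R' by simp
      then obtain j where j: "j \<in> R" "j \<notin> R'" by auto
      have jN: "j < N" using RSsub[OF R(1)] j by auto
      have "{R'' \<in> RS. j \<in> R''} = {R'' \<in> RS. R \<subseteq> R''}"
      proof
        show "{R'' \<in> RS. R \<subseteq> R''} \<subseteq> {R'' \<in> RS. j \<in> R''}" using j by auto
        show "{R'' \<in> RS. j \<in> R''} \<subseteq> {R'' \<in> RS. R \<subseteq> R''}"
        proof
          fix R'' assume R'': "R'' \<in> {R'' \<in> RS. j \<in> R''}"
          show "R'' \<in> {R'' \<in> RS. R \<subseteq> R''}"
          proof (rule ccontr)
            assume "R'' \<notin> {R'' \<in> RS. R \<subseteq> R''}"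
            then have nR: "\<not> R \<subseteq> R''" using R'' by auto
            then have "\<rho> R < \<rho> R''" using r2[OF R(1), of R''] R'' by auto
            then have "\<rho> R' \<le> \<rho> R''" using R R' by simp
            then have "R'' \<subseteq> R'" using r2[of R'' R'] R' R'' by auto
            then show False using R'' j by auto
          qed
        qed
      qed
      then have "f j = l" unfolding f_def using jN R \<rho>_def by simp
      then show "l \<in> f ` {..<N}" using jN by (metis imageI lessThan_iff)
    qed
  qed
  have "A = Phi k N \<sigma> f"
  proof (intro ext)
    fix i j
    show "A i j = Phi k N \<sigma> f i j"
    proof (cases "i < k \<and> j < N")
      case False
      then show ?thesis using Az unfolding zo_matrices_def Phi_def by auto
    next
      case True
      then have i: "i < k" and j: "j < N" by auto
      define Ri where "Ri = rw N A i"
      have Ri: "Ri \<in> RS" unfolding Ri_def using rwRS[OF i] .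
      have si: "\<sigma> i = \<rho> Ri" unfolding \<sigma>_def Ri_def using i by simp
      have fj: "f j = card {R \<in> RS. j \<in> R}" unfolding f_def using j by simp
      show ?thesis
      proof (cases "A i j")
        case True
        then have "j \<in> Ri" unfolding Ri_def rw_def using j by simp
        then have "{R \<in> RS. Ri \<subseteq> R} \<subseteq> {R \<in> RS. j \<in> R}" by auto
        then have "\<sigma> i \<le> f j" unfolding si fj \<rho>_def using finRS by (intro card_mono) auto
        then show ?thesis using True i j unfolding Phi_def by simp
      next
        case False
        then have jR: "j \<notin> Ri" unfolding Ri_def rw_def by simp
        have "{R \<in> RS. j \<in> R} \<subset> {R \<in> RS. Ri \<subseteq> R}"
        proof
          show "{R \<in> RS. j \<in> R} \<subseteq> {R \<in> RS. Ri \<subseteq> R}"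
          proof
            fix R assume R: "R \<in> {R \<in> RS. j \<in> R}"
            then have "\<not> R \<subseteq> Ri" using jR by auto
            then have "Ri \<subseteq> R" using chain[OF Ri, of R] R by auto
            then show "R \<in> {R \<in> RS. Ri \<subseteq> R}" using R by auto
          qed
          show "{R \<in> RS. j \<in> R} \<noteq> {R \<in> RS. Ri \<subseteq> R}" using Ri jR by auto
        qed
        then have "f j < \<sigma> i" unfolding si fj \<rho>_def using finRS by (intro psubset_card_mono) auto
        then show ?thesis using False unfolding Phi_def by simp
      qed
    qed
  qed
  moreover have "(\<sigma>, f) \<in> Dom k N" unfolding Dom_def using mk sig fF by blast
  ultimately show ?thesis by (metis (no_types, lifting) case_prod_conv image_eqI)
qed



lemma L_formula:
  assumes k: "k > 0"
  shows "int (L k N) = (\<Sum>m\<in>{1..k}. ie m (int m) k * ie (m - 1) (int m + 1) N)"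
proof -
  have seteq: "{A. lonesum k N A} = (\<lambda>(\<sigma>, f). Phi k N \<sigma> f) ` Dom k N"
  proof
    show "{A. lonesum k N A} \<subseteq> (\<lambda>(\<sigma>, f). Phi k N \<sigma> f) ` Dom k N"
      using phi_surj[OF k] by blast
    show "(\<lambda>(\<sigma>, f). Phi k N \<sigma> f) ` Dom k N \<subseteq> {A. lonesum k N A}"
      using phi_lonesum by auto
  qed
  have finS: "finite (SIG k m)" for m
    unfolding SIG_def by (rule finite_subset[OF _ finite_PiE[of "{..<k}" "\<lambda>_. {1..m}"]]) auto
  have finF: "finite (FF N m)" for m
    unfolding FF_def by (rule finite_subset[OF _ finite_PiE[of "{..<N}" "\<lambda>_. {0..m}"]]) auto
  have disj: "(SIG k m \<times> FF N m) \<inter> (SIG k m' \<times> FF N m') = {}"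
    if "m \<in> {1..k}" "m' \<in> {1..k}" "m \<noteq> m'" for m m'
  proof -
    have "SIG k m \<inter> SIG k m' = {}"
    proof (rule ccontr)
      assume "SIG k m \<inter> SIG k m' \<noteq> {}"
      then obtain \<sigma> where s: "\<sigma> \<in> SIG k m" "\<sigma> \<in> SIG k m'" by blast
      have p1: "\<sigma> \<in> {..<k} \<rightarrow>\<^sub>E {1..m}" "\<sigma> \<in> {..<k} \<rightarrow>\<^sub>E {1..m'}"
        using s unfolding SIG_def by blast+
      have a: "\<sigma> ` {..<k} \<subseteq> {1..m}" "\<sigma> ` {..<k} \<subseteq> {1..m'}"
        using PiE_mem[OF p1(1)] PiE_mem[OF p1(2)] by blast+
      have b: "{1..m} \<subseteq> \<sigma> ` {..<k}" "{1..m'} \<subseteq> \<sigma> ` {..<k}" using s unfolding SIG_def by blast+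
      have m1: "m \<in> {1..m}" "m' \<in> {1..m'}" using that by auto
      have "m \<in> {1..m'}" by (rule subsetD[OF a(2) subsetD[OF b(1) m1(1)]])
      moreover have "m' \<in> {1..m}" by (rule subsetD[OF a(1) subsetD[OF b(2) m1(2)]])
      ultimately show False using that by simp
    qed
    then show ?thesis by auto
  qed
  have "L k N = card (Dom k N)"
    unfolding L_def seteq by (rule card_image[OF phi_inj])
  also have "\<dots> = (\<Sum>m\<in>{1..k}. card (SIG k m \<times> FF N m))"
    unfolding Dom_def using finS finF disj by (intro card_UN_disjoint) auto
  also have "\<dots> = (\<Sum>m\<in>{1..k}. card (SIG k m) * card (FF N m))"
    by (simp add: card_cartesian_product)
  finally have "int (L k N) = (\<Sum>m\<in>{1..k}. int (card (SIG k m)) * int (card (FF N m)))" by simp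
  also have "\<dots> = (\<Sum>m\<in>{1..k}. ie m (int m) k * ie (m - 1) (int m + 1) N)"
  proof (rule sum.cong[OF refl])
    fix m assume m: "m \<in> {1..k}"
    have "int (card (SIG k m)) = ie (card {1..m}) (int (card {1..m})) (card {..<k})"
      unfolding SIG_def by (rule ie_card) auto
    moreover have "int (card (FF N m)) = ie (card {1..m-1}) (int (card {0..m})) (card {..<N})"
      unfolding FF_def by (rule ie_card) auto
    ultimately show "int (card (SIG k m)) * int (card (FF N m)) = ie m (int m) k * ie (m - 1) (int m + 1) N"
      by (simp add: add.commute)
  qed
  finally show ?thesis .
qed


theorem theorem3p8:
  fixes k M n :: nat
  assumes "k > 0" and "M > 0"
    and "\<forall>p. prime p \<longrightarrow> multiplicity p M \<le> n"
  shows "[(\<Sum>i<totient M. L k (n + i)) = (\<Sum>i<totient M. L (n + i) k)] (mod M) \<and>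
         [(\<Sum>i<totient M. L (n + i) k) = 0] (mod M)"
proof -
  have sym: "(\<Sum>i<totient M. L k (n + i)) = (\<Sum>i<totient M. L (n + i) k)"
    by (rule sum.cong[OF refl]) (rule L_sym)
  have "int (\<Sum>i<totient M. L k (n + i)) =
     (\<Sum>i<totient M. \<Sum>m\<in>{1..k}. ie m (int m) k * ie (m - 1) (int m + 1) (n + i))"
    using L_formula[OF assms(1)] by simp
  then have "int M dvd int (\<Sum>i<totient M. L k (n + i))"
    using final_arith[OF assms] by simp
  then have "M dvd (\<Sum>i<totient M. L k (n + i))" by (simp only: int_dvd_int_iff)
  then have "[(\<Sum>i<totient M. L (n + i) k) = 0] (mod M)"
    unfolding sym by (simp add: cong_0_iff)
  then show ?thesis using sym by simp
qed

end
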